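(* Let $c\ge2$, let $\Gamma=(V,E)$ be a $c$-uniform unoriented hypergraph with no isolated vertices, let $k\ge2$ and let $V_1,\dots,V_k$ be a partition of $V$. Assume there is an integer $m\ge1$ such that $|e\cap V_i|\in\{0,m\}$ for every $e\in E$ and every $i=1,\dots,k$. Then the functions $g_{ij}$ (for all distinct $i,j\in\{1,\dots,k\}$) are all eigenfunctions of the normalized Laplacian $L$ if and only if for all $i=1,\dots,k$ and all $v\in V$, \[ \bigl|\{e\in E: v\in e,\ e\cap V_i\neq\varnothing\}\bigr|=\begin{cases}\dfrac{(c/m-1)\deg v}{k-1}, & v\notin V_i,\\[2mm] \deg v, & v\in V_i.\end{cases} \] In this case the corresponding eigenvalue is $\dfrac{mk-c}{k-1}$.
   Context: A hypergraph has finite vertex set $V$ and edge set $E\subseteq\mathcal P(V)$; it is $c$-uniform if $|e|=c$ for all $e$, and unoriented means all incidences have orientation $+1$. $\deg v=|\{e\in E: v\in e\}|\ge1$, $D=\mathrm{diag}(\deg v)$, adjacency $A_{v,v}=0$ and $A_{v,w}=-|\{e\in E: v,w\in e\}|$ for $v\ne w$, normalized Laplacian $L=\mathrm{Id}-D^{-1}A$. Given a partition $V_1,\dots,V_k$ of $V$ and distinct $i,j$, the function $g_{ij}\colon V\to\mathbb R$ is defined by $g_{ij}(w)=1$ if $w\in V_i$, $g_{ij}(w)=-1$ if $w\in V_j$, and $g_{ij}(w)=0$ otherwise. *)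

theory Defs
  imports Complex_Main
begin

text \<open>A hypergraph on a finite vertex set V with edge set E, a set of subsets of V.
  It is unoriented: all incidences have orientation +1 (so no orientation data is needed).\<close>
definition hypergraph :: "'a set \<Rightarrow> 'a set set \<Rightarrow> bool" where
  "hypergraph V E \<longleftrightarrow> finite V \<and> E \<subseteq> Pow V"

definition uniform :: "nat \<Rightarrow> 'a set set \<Rightarrow> bool" where
  "uniform c E \<longleftrightarrow> (\<forall>e\<in>E. card e = c)"

definition hdeg :: "'a set set \<Rightarrow> 'a \<Rightarrow> nat" where
  "hdeg E v = card {e\<in>E. v \<in> e}"

definition no_isolated :: "'a set \<Rightarrow> 'a set set \<Rightarrow> bool" where
  "no_isolated V E \<longleftrightarrow> (\<forall>v\<in>V. hdeg E v \<ge> 1)"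

definition hadj :: "'a set set \<Rightarrow> 'a \<Rightarrow> 'a \<Rightarrow> real" where
  "hadj E v w = (if v = w then 0 else - real (card {e\<in>E. v \<in> e \<and> w \<in> e}))"

definition norm_lap :: "'a set \<Rightarrow> 'a set set \<Rightarrow> ('a \<Rightarrow> real) \<Rightarrow> 'a \<Rightarrow> real" where
  "norm_lap V E f v = f v - (1 / real (hdeg E v)) * (\<Sum>w\<in>V. hadj E v w * f w)"

definition eigenpair :: "'a set \<Rightarrow> 'a set set \<Rightarrow> ('a \<Rightarrow> real) \<Rightarrow> real \<Rightarrow> bool" where
  "eigenpair V E f lam \<longleftrightarrow> (\<exists>v\<in>V. f v \<noteq> 0) \<and> (\<forall>v\<in>V. norm_lap V E f v = lam * f v)"

definition eigenfunction :: "'a set \<Rightarrow> 'a set set \<Rightarrow> ('a \<Rightarrow> real) \<Rightarrow> bool" where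
  "eigenfunction V E f \<longleftrightarrow> (\<exists>lam. eigenpair V E f lam)"

definition is_partition :: "'a set \<Rightarrow> nat \<Rightarrow> (nat \<Rightarrow> 'a set) \<Rightarrow> bool" where
  "is_partition V k P \<longleftrightarrow>
     (\<forall>i\<in>{1..k}. P i \<noteq> {} \<and> P i \<subseteq> V) \<and>
     (\<forall>i\<in>{1..k}. \<forall>j\<in>{1..k}. i \<noteq> j \<longrightarrow> P i \<inter> P j = {}) \<and>
     (\<Union>i\<in>{1..k}. P i) = V"

definition gfun :: "(nat \<Rightarrow> 'a set) \<Rightarrow> nat \<Rightarrow> nat \<Rightarrow> 'a \<Rightarrow> real" where
  "gfun P i j w = (if w \<in> P i then 1 else if w \<in> P j then -1 else 0)"

end

theory Submission
  imports Defs
begin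

lemma sum_ind: "finite A \<Longrightarrow> (\<Sum>x\<in>A. if P x then (1::real) else 0) = real (card {x\<in>A. P x})"
  by (simp add: sum.If_cases Int_def conj_commute)

definition NN :: "'a set set \<Rightarrow> ('a set) \<Rightarrow> 'a \<Rightarrow> nat" where
  "NN E Q v = card {e\<in>E. v \<in> e \<and> e \<inter> Q \<noteq> {}}"

lemma card_block:
  assumes "finite e" "card (e \<inter> Q) \<in> {0, m}"
  shows "real (card (e \<inter> Q)) = real m * (if e \<inter> Q \<noteq> {} then 1 else 0)"
  using assms by auto

lemma key:
  assumes hg: "hypergraph V E" and v: "v \<in> V" and disj: "P i \<inter> P j = {}"
    and dpos: "hdeg E v \<ge> 1"
    and ci: "\<forall>e\<in>E. card (e \<inter> P i) \<in> {0, m}" and cj: "\<forall>e\<in>E. card (e \<inter> P j) \<in> {0, m}"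
  shows "norm_lap V E (gfun P i j) v
     = real m * (real (NN E (P i) v) - real (NN E (P j) v)) / real (hdeg E v)"
proof -
  let ?f = "gfun P i j"
  define Ev where "Ev = {e\<in>E. v \<in> e}"
  have fV: "finite V" and EV: "E \<subseteq> Pow V" using hg by (auto simp: hypergraph_def)
  have fE: "finite E" by (rule finite_subset[OF EV]) (simp add: fV finite_Pow_iff)
  have fEv: "finite Ev" using fE by (simp add: Ev_def)
  have fe: "\<And>e. e \<in> E \<Longrightarrow> finite e" using fV EV by (auto intro: finite_subset)
  have eV: "\<And>e. e \<in> E \<Longrightarrow> e \<subseteq> V" using EV by blast
  have h1: "hadj E v w * ?f w = - (\<Sum>e\<in>Ev. if w \<in> e \<and> w \<noteq> v then ?f w else 0)" for w
  proof (cases "w = v")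
    case True then show ?thesis by (simp add: hadj_def)
  next
    case False
    have "{e\<in>E. v \<in> e \<and> w \<in> e} = {e\<in>Ev. w \<in> e}" by (auto simp: Ev_def)
    then have "real (card {e\<in>E. v \<in> e \<and> w \<in> e}) = (\<Sum>e\<in>Ev. if w \<in> e then 1 else 0)"
      using sum_ind[OF fEv, of "\<lambda>e. w \<in> e"] by simp
    then show ?thesis using False
      by (simp add: hadj_def sum_distrib_right if_distrib[of "\<lambda>x. x * _"] cong: if_cong)
  qed
  have h2: "(\<Sum>w\<in>V. if w \<in> e \<and> w \<noteq> v then ?f w else 0) = (\<Sum>w\<in>e. ?f w) - ?f v"
    if "e \<in> Ev" for e
  proof -
    have eV': "e \<subseteq> V" "finite e" "v \<in> e" using that eV fe by (auto simp: Ev_def)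
    have "(\<Sum>w\<in>V. if w \<in> e \<and> w \<noteq> v then ?f w else 0) = (\<Sum>w\<in>V \<inter> {w. w \<in> e \<and> w \<noteq> v}. ?f w)"
      using fV by (simp add: sum.inter_restrict)
    also have "V \<inter> {w. w \<in> e \<and> w \<noteq> v} = e - {v}" using eV' by auto
    also have "(\<Sum>w\<in>e - {v}. ?f w) = (\<Sum>w\<in>e. ?f w) - ?f v"
      using eV' by (simp add: sum_diff1)
    finally show ?thesis .
  qed
  have h3: "(\<Sum>w\<in>e. ?f w) = real m * (if e \<inter> P i \<noteq> {} then 1 else 0)
        - real m * (if e \<inter> P j \<noteq> {} then 1 else 0)" if "e \<in> Ev" for e
  proof -
    have e: "e \<in> E" "finite e" using that fe by (auto simp: Ev_def)
    have "?f w = (if w \<in> P i then 1 else 0) - (if w \<in> P j then 1 else 0)" for w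
      using disj by (auto simp: gfun_def)
    then have "(\<Sum>w\<in>e. ?f w) = (\<Sum>w\<in>e. if w \<in> P i then 1 else 0) - (\<Sum>w\<in>e. if w \<in> P j then (1::real) else 0)"
      by (simp add: sum_subtractf)
    also have "\<dots> = real (card (e \<inter> P i)) - real (card (e \<inter> P j))"
      using e by (simp add: sum.If_cases)
    also have "\<dots> = real m * (if e \<inter> P i \<noteq> {} then 1 else 0)
        - real m * (if e \<inter> P j \<noteq> {} then 1 else 0)"
      using card_block[OF e(2)] ci cj e(1) by metis
    finally show ?thesis .
  qed
  have "(\<Sum>w\<in>V. hadj E v w * ?f w) = - (\<Sum>w\<in>V. \<Sum>e\<in>Ev. if w \<in> e \<and> w \<noteq> v then ?f w else 0)"
    by (simp add: h1 sum_negf)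
  also have "\<dots> = - (\<Sum>e\<in>Ev. \<Sum>w\<in>V. if w \<in> e \<and> w \<noteq> v then ?f w else 0)"
    by (subst sum.swap) (rule refl)
  also have "\<dots> = - (\<Sum>e\<in>Ev. real m * (if e \<inter> P i \<noteq> {} then 1 else 0)
        - real m * (if e \<inter> P j \<noteq> {} then 1 else 0) - ?f v)"
    using h2 h3 by simp
  also have "\<dots> = - (real m * real (NN E (P i) v) - real m * real (NN E (P j) v) - real (hdeg E v) * ?f v)"
  proof -
    have a: "(\<Sum>e\<in>Ev. if e \<inter> Q \<noteq> {} then 1 else (0::real)) = real (NN E Q v)" for Q
    proof -
      have "{e\<in>Ev. e \<inter> Q \<noteq> {}} = {e\<in>E. v \<in> e \<and> e \<inter> Q \<noteq> {}}" by (auto simp: Ev_def)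
      then show ?thesis using sum_ind[OF fEv, of "\<lambda>e. e \<inter> Q \<noteq> {}"] by (simp add: NN_def)
    qed
    have b: "card Ev = hdeg E v" by (simp add: Ev_def hdeg_def)
    show ?thesis
      by (simp add: sum_subtractf sum_distrib_left[symmetric] a b)
  qed
  finally have S: "(\<Sum>w\<in>V. hadj E v w * ?f w) = - (real m * real (NN E (P i) v) - real m * real (NN E (P j) v) - real (hdeg E v) * ?f v)" .
  have d0: "real (hdeg E v) \<noteq> 0" using dpos by simp
  show ?thesis unfolding norm_lap_def S using d0
    by (simp add: field_simps)
qed

lemma sumN:
  assumes hg: "hypergraph V E" and v: "v \<in> V" and un: "uniform c E"
    and part: "is_partition V k P"
    and cc: "\<forall>e\<in>E. \<forall>i\<in>{1..k}. card (e \<inter> P i) \<in> {0, m}"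
  shows "real m * (\<Sum>i\<in>{1..k}. real (NN E (P i) v)) = real c * real (hdeg E v)"
proof -
  define Ev where "Ev = {e\<in>E. v \<in> e}"
  have fV: "finite V" and EV: "E \<subseteq> Pow V" using hg by (auto simp: hypergraph_def)
  have fE: "finite E" by (rule finite_subset[OF EV]) (simp add: fV finite_Pow_iff)
  have fEv: "finite Ev" using fE by (simp add: Ev_def)
  have fe: "\<And>e. e \<in> E \<Longrightarrow> finite e" using fV EV by (auto intro: finite_subset)
  have eV: "\<And>e. e \<in> E \<Longrightarrow> e \<subseteq> V" using EV by blast
  have a: "real (NN E Q v) = (\<Sum>e\<in>Ev. if e \<inter> Q \<noteq> {} then 1 else (0::real))" for Q
  proof -
    have "{e\<in>Ev. e \<inter> Q \<noteq> {}} = {e\<in>E. v \<in> e \<and> e \<inter> Q \<noteq> {}}" by (auto simp: Ev_def)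
    then show ?thesis using sum_ind[OF fEv, of "\<lambda>e. e \<inter> Q \<noteq> {}"] by (simp add: NN_def)
  qed
  have b: "(\<Sum>i\<in>{1..k}. real m * (if e \<inter> P i \<noteq> {} then 1 else 0)) = real c" if "e \<in> Ev" for e
  proof -
    have e: "e \<in> E" "finite e" using that fe by (auto simp: Ev_def)
    have "(\<Sum>i\<in>{1..k}. real m * (if e \<inter> P i \<noteq> {} then 1 else 0)) = (\<Sum>i\<in>{1..k}. real (card (e \<inter> P i)))"
    proof (rule sum.cong[OF refl])
      fix i assume "i \<in> {1..k}"
      then have "card (e \<inter> P i) \<in> {0, m}" using cc e(1) by blast
      from card_block[OF e(2) this]
      show "real m * (if e \<inter> P i \<noteq> {} then 1 else 0) = real (card (e \<inter> P i))" by simp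
    qed
    also have "\<dots> = real (\<Sum>i\<in>{1..k}. card (e \<inter> P i))" by simp
    also have "(\<Sum>i\<in>{1..k}. card (e \<inter> P i)) = card (\<Union>i\<in>{1..k}. e \<inter> P i)"
    proof (rule card_UN_disjoint[symmetric])
      show "\<forall>i\<in>{1..k}. \<forall>j\<in>{1..k}. i \<noteq> j \<longrightarrow> (e \<inter> P i) \<inter> (e \<inter> P j) = {}"
        using part unfolding is_partition_def by blast
    qed (simp_all add: e(2))
    also have "(\<Union>i\<in>{1..k}. e \<inter> P i) = e" using part eV[OF e(1)] by (auto simp: is_partition_def)
    also have "card e = c" using un e(1) by (simp add: uniform_def)
    finally show ?thesis .
  qed
  have "real m * (\<Sum>i\<in>{1..k}. real (NN E (P i) v)) = (\<Sum>i\<in>{1..k}. \<Sum>e\<in>Ev. real m * (if e \<inter> P i \<noteq> {} then 1 else 0))"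
    by (simp add: a sum_distrib_left)
  also have "\<dots> = (\<Sum>e\<in>Ev. \<Sum>i\<in>{1..k}. real m * (if e \<inter> P i \<noteq> {} then 1 else 0))"
    by (rule sum.swap)
  also have "\<dots> = (\<Sum>e\<in>Ev. real c)" using b by simp
  also have "\<dots> = real c * real (hdeg E v)" by (simp add: Ev_def hdeg_def)
  finally show ?thesis .
qed

theorem mainTheorem7:
  fixes V :: "'a set" and E :: "'a set set" and P :: "nat \<Rightarrow> 'a set"
    and c k m :: nat
  assumes "c \<ge> 2"
    and "hypergraph V E" and "uniform c E" and "no_isolated V E"
    and "k \<ge> 2" and "is_partition V k P"
    and "m \<ge> 1"
    and "\<forall>e\<in>E. \<forall>i\<in>{1..k}. card (e \<inter> P i) \<in> {0, m}"
  shows "((\<forall>i\<in>{1..k}. \<forall>j\<in>{1..k}. i \<noteq> j \<longrightarrow> eigenfunction V E (gfun P i j)) \<longleftrightarrow>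
          (\<forall>i\<in>{1..k}. \<forall>v\<in>V.
             real (card {e\<in>E. v \<in> e \<and> e \<inter> P i \<noteq> {}}) =
               (if v \<notin> P i
                then (real c / real m - 1) * real (hdeg E v) / (real k - 1)
                else real (hdeg E v))))
       \<and> ((\<forall>i\<in>{1..k}. \<forall>v\<in>V.
             real (card {e\<in>E. v \<in> e \<and> e \<inter> P i \<noteq> {}}) =
               (if v \<notin> P i
                then (real c / real m - 1) * real (hdeg E v) / (real k - 1)
                else real (hdeg E v)))
          \<longrightarrow> (\<forall>i\<in>{1..k}. \<forall>j\<in>{1..k}. i \<noteq> j \<longrightarrow>
                 eigenpair V E (gfun P i j) ((real m * real k - real c) / (real k - 1))))"
proof -
  note hg = assms(2) and part = assms(6) and cc = assms(8)
  have fV: "finite V" using hg by (simp add: hypergraph_def)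
  have dpos: "\<And>v. v \<in> V \<Longrightarrow> hdeg E v \<ge> 1" using assms(4) by (simp add: no_isolated_def)
  have PV: "\<And>i. i \<in> {1..k} \<Longrightarrow> P i \<subseteq> V" and Pne: "\<And>i. i \<in> {1..k} \<Longrightarrow> P i \<noteq> {}"
    and Pdisj: "\<And>i j. i \<in> {1..k} \<Longrightarrow> j \<in> {1..k} \<Longrightarrow> i \<noteq> j \<Longrightarrow> P i \<inter> P j = {}"
    and Pcov: "\<And>v. v \<in> V \<Longrightarrow> \<exists>l\<in>{1..k}. v \<in> P l"
    using part by (auto simp: is_partition_def)
  have keyN: "norm_lap V E (gfun P i j) v
     = real m * (real (NN E (P i) v) - real (NN E (P j) v)) / real (hdeg E v)"
    if "i \<in> {1..k}" "j \<in> {1..k}" "i \<noteq> j" "v \<in> V" for i j v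
    using key[OF hg that(4) Pdisj[OF that(1-3)] dpos[OF that(4)]] cc that(1,2) by blast
  have NNin: "real (card {e\<in>E. v \<in> e \<and> e \<inter> P i \<noteq> {}}) = real (hdeg E v)" if "v \<in> P i" for v i
  proof -
    have "{e\<in>E. v \<in> e \<and> e \<inter> P i \<noteq> {}} = {e\<in>E. v \<in> e}" using that by auto
    then show ?thesis by (simp add: hdeg_def)
  qed
  have k1: "real k - 1 > 0" using assms(5) by simp
  have mpos: "real m > 0" using assms(7) by simp
  let ?C = "\<forall>i\<in>{1..k}. \<forall>v\<in>V.
             real (card {e\<in>E. v \<in> e \<and> e \<inter> P i \<noteq> {}}) =
               (if v \<notin> P i
                then (real c / real m - 1) * real (hdeg E v) / (real k - 1)
                else real (hdeg E v))"
  let ?lam = "(real m * real k - real c) / (real k - 1)"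
  have part2: "\<forall>i\<in>{1..k}. \<forall>j\<in>{1..k}. i \<noteq> j \<longrightarrow> eigenpair V E (gfun P i j) ?lam" if C: ?C
  proof (intro ballI impI)
    fix i j assume ij: "i \<in> {1..k}" "j \<in> {1..k}" "i \<noteq> j"
    have dis: "P i \<inter> P j = {}" using Pdisj ij by blast
    obtain v0 where "v0 \<in> P i" using Pne ij(1) by blast
    then have ex: "\<exists>v\<in>V. gfun P i j v \<noteq> 0" using PV ij(1) by (auto simp: gfun_def)
    have "norm_lap V E (gfun P i j) v = ?lam * gfun P i j v" if v: "v \<in> V" for v
    proof -
      have d0: "real (hdeg E v) > 0" using dpos[OF v] by simp
      have Ci: "real (NN E (P i) v) = (if v \<notin> P i then (real c / real m - 1) * real (hdeg E v) / (real k - 1) else real (hdeg E v))"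
        using C ij(1) v unfolding NN_def by blast
      have Cj: "real (NN E (P j) v) = (if v \<notin> P j then (real c / real m - 1) * real (hdeg E v) / (real k - 1) else real (hdeg E v))"
        using C ij(2) v unfolding NN_def by blast
      show ?thesis
      proof (cases "v \<in> P i")
        case True
        then have "v \<notin> P j" using dis by blast
        then have "norm_lap V E (gfun P i j) v = real m * (real (hdeg E v) - (real c / real m - 1) * real (hdeg E v) / (real k - 1)) / real (hdeg E v)"
          using True Ci Cj keyN[OF ij v] by simp
        also have "\<dots> = ?lam" using d0 k1 mpos by (simp add: field_simps)
        finally show ?thesis using True by (simp add: gfun_def)
      next
        case F: False
        show ?thesis
        proof (cases "v \<in> P j")
          case True
          then have "norm_lap V E (gfun P i j) v = real m * ((real c / real m - 1) * real (hdeg E v) / (real k - 1) - real (hdeg E v)) / real (hdeg E v)"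
            using F Ci Cj keyN[OF ij v] by simp
          also have "\<dots> = - ?lam" using d0 k1 mpos by (simp add: field_simps)
          finally show ?thesis using True F by (simp add: gfun_def)
        next
          case False
          then show ?thesis using F Ci Cj keyN[OF ij v]
            by (simp add: gfun_def)
        qed
      qed
    qed
    then show "eigenpair V E (gfun P i j) ?lam" using ex by (simp add: eigenpair_def)
  qed
  have part1: ?C if EF: "\<forall>i\<in>{1..k}. \<forall>j\<in>{1..k}. i \<noteq> j \<longrightarrow> eigenfunction V E (gfun P i j)"
  proof (intro ballI)
    fix i v assume i: "i \<in> {1..k}" and v: "v \<in> V"
    obtain l where l: "l \<in> {1..k}" "v \<in> P l" using Pcov v by blast
    show "real (card {e\<in>E. v \<in> e \<and> e \<inter> P i \<noteq> {}}) =
               (if v \<notin> P i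
                then (real c / real m - 1) * real (hdeg E v) / (real k - 1)
                else real (hdeg E v))"
    proof (cases "v \<in> P i")
      case True then show ?thesis using NNin by simp
    next
      case False
      then have il: "i \<noteq> l" using l by blast
      have d0: "real (hdeg E v) > 0" using dpos[OF v] by simp
      have eq: "real (NN E (P j) v) = real (NN E (P i) v)" if j: "j \<in> {1..k} - {l}" for j
      proof (cases "j = i")
        case True then show ?thesis by simp
      next
        case ji: False
        have jl: "v \<notin> P j" "v \<notin> P i" using l j Pdisj i il by blast+
        have j1: "j \<in> {1..k}" using j by blast
        have "eigenfunction V E (gfun P i j)" using EF[rule_format, OF i j1 not_sym[OF ji]] .
        then obtain lam where "eigenpair V E (gfun P i j) lam" unfolding eigenfunction_def by blast
        then have "norm_lap V E (gfun P i j) v = 0" using v jl by (simp add: eigenpair_def gfun_def)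
        then have "real m * (real (NN E (P i) v) - real (NN E (P j) v)) / real (hdeg E v) = 0"
          using keyN[of i j v] i j ji v by simp
        then show ?thesis using d0 mpos by simp
      qed
      have "(\<Sum>j\<in>{1..k}. real (NN E (P j) v)) = real (NN E (P l) v) + (\<Sum>j\<in>{1..k} - {l}. real (NN E (P j) v))"
        using l(1) by (simp add: sum.remove)
      also have "(\<Sum>j\<in>{1..k} - {l}. real (NN E (P j) v)) = (\<Sum>j\<in>{1..k} - {l}. real (NN E (P i) v))"
        using eq by (rule sum.cong[OF refl])
      also have "\<dots> = (real k - 1) * real (NN E (P i) v)" using l(1) assms(5) by (simp add: of_nat_diff)
      also have "real (NN E (P l) v) = real (hdeg E v)" using NNin[OF l(2)] by (simp add: NN_def)
      finally have S: "(\<Sum>j\<in>{1..k}. real (NN E (P j) v)) = real (hdeg E v) + (real k - 1) * real (NN E (P i) v)" .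
      have "real m * (real (hdeg E v) + (real k - 1) * real (NN E (P i) v)) = real c * real (hdeg E v)"
        using sumN[OF hg v assms(3) part cc] S by simp
      then have "real (NN E (P i) v) = (real c / real m - 1) * real (hdeg E v) / (real k - 1)"
        using k1 mpos by (simp add: field_simps)
      then show ?thesis using False by (simp add: NN_def)
    qed
  qed
  have part3: "\<forall>i\<in>{1..k}. \<forall>j\<in>{1..k}. i \<noteq> j \<longrightarrow> eigenfunction V E (gfun P i j)" if C: ?C
  proof (intro ballI impI)
    fix i j assume ij3: "i \<in> {1..k}" "j \<in> {1..k}" "i \<noteq> j"
    have "eigenpair V E (gfun P i j) ?lam" using part2[OF C, rule_format, OF ij3] .
    then show "eigenfunction V E (gfun P i j)" unfolding eigenfunction_def by blast
  qed
  show ?thesis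
  proof (intro conjI iffI impI)
    show ?C if "\<forall>i\<in>{1..k}. \<forall>j\<in>{1..k}. i \<noteq> j \<longrightarrow> eigenfunction V E (gfun P i j)"
      using part1[OF that] .
    show "\<forall>i\<in>{1..k}. \<forall>j\<in>{1..k}. i \<noteq> j \<longrightarrow> eigenfunction V E (gfun P i j)" if ?C
      using part3[OF that] .
    show "\<forall>i\<in>{1..k}. \<forall>j\<in>{1..k}. i \<noteq> j \<longrightarrow> eigenpair V E (gfun P i j) ?lam" if ?C
      using part2[OF that] .
  qed
qed

end
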